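(* Let $\Omega$ be a convex subset of $M^{\mathbb{R}}_{n\times n}(\mathbb{C})$ and let $\Omega_d$ be the set of matrices in $\Omega$ having $n$ distinct eigenvalues. Then $\Omega_d$ is dense in $\Omega$ if and only if $\Omega_d$ is nonempty.
   Context: $M^{\mathbb{R}}_{n\times n}(\mathbb{C})$ denotes the set of $n\times n$ complex matrices all of whose eigenvalues are real, with the topology induced by the Frobenius norm. *)

theory Defs
  imports "HOL-Analysis.Analysis"
begin

text \<open>n x n complex matrices are modelled as complex^'n^'n (n = CARD('n) >= 1).
  The norm on this type is the Euclidean norm of all entries, i.e. the Frobenius norm.\<close>

definition eigenvalue :: "complex^'n^'n \<Rightarrow> complex \<Rightarrow> bool" where
  "eigenvalue A c \<longleftrightarrow> (\<exists>v. v \<noteq> 0 \<and> A *v v = c *s v)"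

definition real_spectrum_matrices :: "(complex^'n^'n) set" where
  "real_spectrum_matrices = {A. \<forall>c. eigenvalue A c \<longrightarrow> Im c = 0}"

definition distinct_eig_part :: "(complex^'n^'n) set \<Rightarrow> (complex^'n^'n) set" where
  "distinct_eig_part \<Omega> = {A \<in> \<Omega>. card {c. eigenvalue A c} = CARD('n)}"

end

theory Submission
  imports Defs "HOL-Computational_Algebra.Field_as_Ring" "Subresultants.Subresultant_Gcd"
    "Jordan_Normal_Form.Char_Poly"
begin

lemma sum_order_complex:
  fixes p :: "complex poly" assumes "p \<noteq> 0"
  shows "(\<Sum>z | poly p z = 0. order z p) = degree p"
proof -
  have "degree p = size (proots p)" by (simp add: size_proots_complex)
  also have "\<dots> = (\<Sum>z\<in>set_mset (proots p). count (proots p) z)"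
    by (rule size_multiset_overloaded_eq)
  also have "set_mset (proots p) = {z. poly p z = 0}" using assms by auto
  also have "(\<Sum>z\<in>{z. poly p z = 0}. count (proots p) z) = (\<Sum>z | poly p z = 0. order z p)"
    using assms by (simp add: count_proots)
  finally show ?thesis by simp
qed

lemma card_roots_iff_rsquarefree:
  fixes p :: "complex poly" assumes p: "p \<noteq> 0"
  shows "card {z. poly p z = 0} = degree p \<longleftrightarrow> rsquarefree p"
proof -
  let ?S = "{z. poly p z = 0}"
  have fin: "finite ?S" using p by (rule poly_roots_finite)
  have ge: "\<forall>z\<in>?S. 1 \<le> order z p" using p by (auto simp: order_root)
  have card: "card ?S = (\<Sum>z\<in>?S. 1)" by simp
  show ?thesis
  proof
    assume h: "card ?S = degree p"
    show "rsquarefree p"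
    proof (rule ccontr)
      assume "\<not> rsquarefree p"
      then obtain a where a: "order a p \<noteq> 0" "order a p \<noteq> 1" using p by (auto simp: rsquarefree_def)
      then have aS: "a \<in> ?S" using p by (auto simp: order_root)
      have "(\<Sum>z\<in>?S. (1::nat)) < (\<Sum>z\<in>?S. order z p)"
        by (rule sum_strict_mono_ex1[OF fin]) (use ge a aS in auto)
      then show False using h sum_order_complex[OF p] by simp
    qed
  next
    assume r: "rsquarefree p"
    have "(\<Sum>z\<in>?S. order z p) = (\<Sum>z\<in>?S. 1)"
      by (rule sum.cong) (use r p rsquarefree_root_order in auto)
    then show "card ?S = degree p" using sum_order_complex[OF p] by simp
  qed
qed

lemma rsquarefree_resultant:
  fixes p :: "complex poly" assumes p: "p \<noteq> 0"
  shows "rsquarefree p \<longleftrightarrow> resultant p (pderiv p) \<noteq> 0"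
proof -
  let ?g = "gcd p (pderiv p)"
  have g0: "?g \<noteq> 0" using p by simp
  have "(\<exists>a. poly p a = 0 \<and> poly (pderiv p) a = 0) \<longleftrightarrow> degree ?g \<noteq> 0"
  proof
    assume "\<exists>a. poly p a = 0 \<and> poly (pderiv p) a = 0"
    then obtain a where "poly p a = 0" "poly (pderiv p) a = 0" by blast
    then have "[:-a,1:] dvd p" "[:-a,1:] dvd pderiv p" by (simp_all add: poly_eq_0_iff_dvd)
    then have "[:-a,1:] dvd ?g" by simp
    then have "poly ?g a = 0" by (simp add: poly_eq_0_iff_dvd)
    then show "degree ?g \<noteq> 0" using g0
      by (metis degree_eq_zeroE pCons_0_0 poly_const_conv)
  next
    assume "degree ?g \<noteq> 0"
    then have "\<not> constant (poly ?g)" by (simp add: constant_degree)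
    then obtain a where "poly ?g a = 0" using fundamental_theorem_of_algebra by blast
    then have "[:-a,1:] dvd ?g" by (simp add: poly_eq_0_iff_dvd)
    then have "[:-a,1:] dvd p" "[:-a,1:] dvd pderiv p" using dvd_trans by blast+
    then show "\<exists>a. poly p a = 0 \<and> poly (pderiv p) a = 0" by (auto simp: poly_eq_0_iff_dvd)
  qed
  then show ?thesis using resultant_0_gcd[of p "pderiv p"] rsquarefree_roots[of p] by blast
qed

lemma card_roots_char_poly:
  fixes A :: "complex mat" assumes A: "A \<in> carrier_mat n n"
  shows "card {c. poly (char_poly A) c = 0} = n \<longleftrightarrow>
     resultant (char_poly A) (pderiv (char_poly A)) \<noteq> 0"
proof -
  from degree_monic_char_poly[OF A] have d: "degree (char_poly A) = n" "coeff (char_poly A) n = 1" by auto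
  then have "char_poly A \<noteq> 0" by auto
  then show ?thesis using card_roots_iff_rsquarefree rsquarefree_resultant d by metis
qed

lemma eigenvalue_bridge:
  fixes A :: "complex^'n^'n" and h :: "nat \<Rightarrow> 'n"
  assumes h: "bij_betw h {0..<CARD('n)} UNIV"
  shows "Defs.eigenvalue A c \<longleftrightarrow>
    Char_Poly.eigenvalue (Matrix.mat CARD('n) CARD('n) (\<lambda>(i,j). vec_nth (vec_nth A (h i)) (h j))) c"
proof -
  define N where "N = CARD('n)"
  define J where "J = Matrix.mat N N (\<lambda>(i,j). vec_nth (vec_nth A (h i)) (h j))"
  have hN: "bij_betw h {0..<N} UNIV" using h N_def by simp
  have reidx: "(\<Sum>j\<in>{0..<N}. f (h j)) = (\<Sum>k\<in>UNIV. f k)" for f :: "'n \<Rightarrow> complex"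
    using sum.reindex_bij_betw[OF hN, of f] .
  have mv: "vec_nth (A *v x) k = (\<Sum>j\<in>UNIV. vec_nth (vec_nth A k) j * vec_nth x j)" for x k
    by (simp add: matrix_vector_mult_def)
  have Jmv: "vec_index (J *\<^sub>v w) i = (\<Sum>j\<in>{0..<N}. vec_nth (vec_nth A (h i)) (h j) * vec_index w j)"
    if "i < N" "w \<in> carrier_vec N" for w i
    using that by (simp add: J_def scalar_prod_def)
  define hi where "hi = inv_into {0..<N} h"
  have hi1: "hi (h i) = i" if "i < N" for i
    using bij_betw_inv_into_left[OF hN] that hi_def by simp
  have hi2: "h (hi k) = k" for k
    using bij_betw_inv_into_right[OF hN] hi_def by simp
  have hi3: "hi k < N" for k
    using bij_betw_inv_into[OF hN] hi_def by (auto dest: bij_betw_apply)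
  have "Defs.eigenvalue A c \<longleftrightarrow> Char_Poly.eigenvalue J c"
  proof
    assume "Defs.eigenvalue A c"
    then obtain v where v: "v \<noteq> 0" "A *v v = c *s v" by (auto simp: Defs.eigenvalue_def)
    define w where "w = vec N (\<lambda>i. vec_nth v (h i))"
    have wc: "w \<in> carrier_vec N" by (simp add: w_def)
    from v(1) obtain k where k: "vec_nth v k \<noteq> 0" by (metis Finite_Cartesian_Product.vec_eq_iff Finite_Cartesian_Product.zero_index)
    have "vec_index w (hi k) \<noteq> 0" using k hi2 hi3 by (simp add: w_def)
    then have w0: "w \<noteq> 0\<^sub>v N" using hi3 by auto
    have "J *\<^sub>v w = c \<cdot>\<^sub>v w"
    proof (rule eq_vecI)
      show "dim_vec (J *\<^sub>v w) = dim_vec (c \<cdot>\<^sub>v w)" by (simp add: J_def w_def)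
      fix i assume "i < dim_vec (c \<cdot>\<^sub>v w)"
      then have i: "i < N" by (simp add: w_def)
      have "vec_index (J *\<^sub>v w) i = (\<Sum>j\<in>{0..<N}. vec_nth (vec_nth A (h i)) (h j) * vec_nth v (h j))"
        using Jmv[OF i wc] by (simp add: w_def)
      also have "\<dots> = vec_nth (A *v v) (h i)"
        using reidx[of "\<lambda>k. vec_nth (vec_nth A (h i)) k * vec_nth v k"] by (simp add: mv)
      also have "\<dots> = c * vec_nth v (h i)" using v(2) by simp
      finally show "vec_index (J *\<^sub>v w) i = vec_index (c \<cdot>\<^sub>v w) i" using i by (simp add: w_def)
    qed
    then show "Char_Poly.eigenvalue J c" using wc w0
      by (auto simp: Char_Poly.eigenvalue_def eigenvector_def J_def)
  next
    assume "Char_Poly.eigenvalue J c"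
    then obtain w where wc: "w \<in> carrier_vec N" and w0: "w \<noteq> 0\<^sub>v N" and wE: "J *\<^sub>v w = c \<cdot>\<^sub>v w"
      by (auto simp: Char_Poly.eigenvalue_def eigenvector_def J_def)
    define v :: "complex^'n" where "v = (\<chi> k. vec_index w (hi k))"
    have vh: "vec_nth v (h i) = vec_index w i" if "i < N" for i
      using that hi1 by (simp add: v_def)
    have "\<exists>i<N. vec_index w i \<noteq> 0"
    proof (rule ccontr)
      assume "\<not> ?thesis"
      then have "w = 0\<^sub>v N" using wc by (intro eq_vecI) auto
      then show False using w0 by simp
    qed
    then obtain i where i: "i < N" "vec_index w i \<noteq> 0" by blast
    have v0: "v \<noteq> 0" using vh[OF i(1)] i(2) by (metis Finite_Cartesian_Product.zero_index)
    have "A *v v = c *s v"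
    proof (subst Finite_Cartesian_Product.vec_eq_iff, rule allI)
      fix k
      define i where "i = hi k"
      have i: "i < N" "h i = k" using hi2 hi3 i_def by auto
      have "vec_nth (A *v v) k = (\<Sum>j\<in>{0..<N}. vec_nth (vec_nth A (h i)) (h j) * vec_nth v (h j))"
        using reidx[of "\<lambda>j. vec_nth (vec_nth A k) j * vec_nth v j"] by (simp add: mv i)
      also have "\<dots> = (\<Sum>j\<in>{0..<N}. vec_nth (vec_nth A (h i)) (h j) * vec_index w j)"
        by (rule sum.cong) (auto simp: vh)
      also have "\<dots> = vec_index (J *\<^sub>v w) i" using Jmv[OF i(1) wc] by simp
      also have "\<dots> = c * vec_index w i" using wE i wc by simp
      also have "\<dots> = vec_nth (c *s v) k" using vh[OF i(1)] i by simp
      finally show "vec_nth (A *v v) k = vec_nth (c *s v) k" .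
    qed
    then show "Defs.eigenvalue A c" using v0 by (auto simp: Defs.eigenvalue_def)
  qed
  then show ?thesis by (simp add: J_def N_def)
qed

definition jmat :: "(nat \<Rightarrow> 'n) \<Rightarrow> complex^'n^'n \<Rightarrow> complex mat" where
  "jmat h A = Matrix.mat CARD('n) CARD('n) (\<lambda>(i,j). vec_nth (vec_nth A (h i)) (h j))"

theorem theorem4p3:
  fixes \<Omega> :: "(complex^'n^'n) set"
  assumes "convex \<Omega>"
    and "\<Omega> \<subseteq> real_spectrum_matrices"
    and "\<Omega> \<noteq> {}"
  shows "\<Omega> \<subseteq> closure (distinct_eig_part \<Omega>) \<longleftrightarrow> distinct_eig_part \<Omega> \<noteq> {}"
proof
  assume "\<Omega> \<subseteq> closure (distinct_eig_part \<Omega>)"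
  then show "distinct_eig_part \<Omega> \<noteq> {}" using assms(3) by auto
next
  assume "distinct_eig_part \<Omega> \<noteq> {}"
  then obtain A0 where A0: "A0 \<in> distinct_eig_part \<Omega>" by blast
  obtain h :: "nat \<Rightarrow> 'n" where h: "bij_betw h {0..<CARD('n)} UNIV"
    using ex_bij_betw_nat_finite[of "UNIV :: 'n set"] by auto
  define N where "N = CARD('n)"
  have jc: "jmat h A \<in> carrier_mat N N" for A by (simp add: jmat_def N_def)
  have good: "A \<in> distinct_eig_part \<Omega> \<longleftrightarrow> A \<in> \<Omega> \<and>
      resultant (char_poly (jmat h A)) (pderiv (char_poly (jmat h A))) \<noteq> 0" for A
  proof -
    have "{c. Defs.eigenvalue A c} = {c. poly (char_poly (jmat h A)) c = 0}"
      using eigenvalue_bridge[OF h, of A] eigenvalue_root_char_poly[OF jc[of A]]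
      by (auto simp: jmat_def)
    then show ?thesis using card_roots_char_poly[OF jc[of A]]
      by (auto simp: distinct_eig_part_def N_def)
  qed
  show "\<Omega> \<subseteq> closure (distinct_eig_part \<Omega>)"
  proof
    fix B assume B: "B \<in> \<Omega>"
    define D where "D = A0 - B"
    define Mp :: "complex poly mat" where
      "Mp = Matrix.mat N N (\<lambda>(i,j). [: vec_nth (vec_nth B (h i)) (h j), vec_nth (vec_nth D (h i)) (h j) :])"
    define P where "P = char_poly Mp"
    define r where "r = resultant P (pderiv P)"
    have Mpc: "Mp \<in> carrier_mat N N" by (simp add: Mp_def)
    have ev: "poly r (of_real t) = resultant (char_poly (jmat h (B + t *\<^sub>R D)))
       (pderiv (char_poly (jmat h (B + t *\<^sub>R D))))" for t
    proof -
      let ?s = "complex_of_real t"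
      have mm: "map_mat (\<lambda>p. poly p ?s) Mp = jmat h (B + t *\<^sub>R D)"
        by (rule eq_matI) (auto simp: Mp_def jmat_def N_def algebra_simps scaleR_conv_of_real[where 'a=complex])
      have cp: "map_poly (\<lambda>p. poly p ?s) P = char_poly (jmat h (B + t *\<^sub>R D))"
        using poly_hom.char_poly_hom[OF Mpc, of ?s] mm P_def by simp
      have d1: "degree (char_poly (jmat h (B + t *\<^sub>R D))) = N"
        using degree_monic_char_poly[OF jc] by simp
      have d2: "degree P = N" using degree_monic_char_poly[OF Mpc] P_def by simp
      have d3: "degree (pderiv (char_poly (jmat h (B + t *\<^sub>R D)))) = N - 1"
        using d1 by (simp add: degree_pderiv)
      have d4: "degree (pderiv P) = N - 1" using d2 by (simp add: degree_pderiv)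
      show ?thesis
        using poly_hom.resultant_map_poly[of ?s P "pderiv P"] cp d1 d2 d3 d4
          poly_hom.map_poly_pderiv[of ?s P] r_def by simp
    qed
    have r0: "r \<noteq> 0"
    proof
      assume rz: "r = 0"
      have "B + 1 *\<^sub>R D = A0" by (simp add: D_def)
      then have "resultant (char_poly (jmat h (B + 1 *\<^sub>R D)))
         (pderiv (char_poly (jmat h (B + 1 *\<^sub>R D)))) \<noteq> 0" using good A0 by auto
      with ev[of 1] rz show False by simp
    qed
    have finZ: "finite {t::real. poly r (of_real t) = 0}"
    proof -
      have "finite {z. poly r z = 0}" using r0 by (rule poly_roots_finite)
      then have "finite (of_real -` {z. poly r z = 0} :: real set)"
        by (rule finite_vimageI) (simp add: inj_def)
      then show ?thesis by (simp add: vimage_def)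
    qed
    have inO: "B + t *\<^sub>R D \<in> distinct_eig_part \<Omega>" if "0 < t" "t \<le> 1" "poly r (of_real t) \<noteq> 0" for t
    proof -
      have "(1 - t) *\<^sub>R B + t *\<^sub>R A0 \<in> \<Omega>"
        using convexD[OF assms(1) B, of A0 "1-t" t] A0 that by (auto simp: distinct_eig_part_def)
      moreover have "(1 - t) *\<^sub>R B + t *\<^sub>R A0 = B + t *\<^sub>R D" by (simp add: D_def algebra_simps)
      ultimately show ?thesis using good ev that by simp
    qed
    show "B \<in> closure (distinct_eig_part \<Omega>)"
    proof (subst closure_approachable, intro allI impI)
      fix e :: real assume e: "e > 0"
      define m where "m = min 1 (e / (norm D + 1))"
      have nD: "norm D + 1 > 0" by (simp add: add_nonneg_pos)
      have m: "m > 0" using e nD by (simp add: m_def)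
      have "infinite {0<..<m}" using m by simp
      then have "infinite ({0<..<m} - {t. poly r (of_real t) = 0})"
        using finZ by (simp add: Diff_infinite_finite)
      then obtain t where t: "t \<in> {0<..<m}" "poly r (of_real t) \<noteq> 0"
        using infinite_imp_nonempty by blast
      have t1: "0 < t" "t \<le> 1" using t by (auto simp: m_def)
      have "t < e / (norm D + 1)" using t by (auto simp: m_def)
      then have "t * (norm D + 1) < e" using nD by (simp add: pos_less_divide_eq)
      then have "t * norm D < e" using t1 by (smt (verit) mult_left_mono)
      then have "dist (B + t *\<^sub>R D) B < e" using t1 by (simp add: dist_norm)
      then show "\<exists>y\<in>distinct_eig_part \<Omega>. dist y B < e" using inO[OF t1 t(2)] by blast
    qed
  qed
qed

end
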